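(* The relation $\{(\rho,\pi):\rho=[n]\text{ and }\pi=[n]!\text{ for some }n\ge1\}$ is $\Pi_2$-definable in $\mathbf Y^*=\langle\mathcal P,\le,[1]+[1]\rangle$.
   Context: $\mathcal P$ is the set of all integer partitions, including the empty partition; a partition is a nonincreasing finite sequence of positive integers (its parts). $[n]$ denotes the partition with a single part $n$. For $n\ge1$, the factorial partition $[n]!$ is the partition $(n,n-1,\dots,2,1)$ with parts $1,2,\dots,n$ each appearing exactly once. Young's lattice $\mathbf Y=\langle\mathcal P,\le\rangle$ has $(s_1,\dots,s_r)\le(n_1,\dots,n_t)$ iff $r\le t$ and $s_i\le n_i$ for all $i\le r$; $\mathbf Y^*$ is $\mathbf Y$ with a constant symbol for the partition $(1,1)$. A relation is $\Pi_n$-definable if it is defined by a first-order formula in the language $\{\le,(1,1)\}$ in prenex form with $n$ alternating quantifier blocks, the outermost universal, and a quantifier-free matrix. *)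

theory Defs
  imports Main
begin

definition is_partition :: "nat list \<Rightarrow> bool" where
  "is_partition xs \<longleftrightarrow> sorted_wrt (\<ge>) xs \<and> (\<forall>x\<in>set xs. 0 < x)"

definition young_le :: "nat list \<Rightarrow> nat list \<Rightarrow> bool" where
  "young_le s n \<longleftrightarrow> length s \<le> length n \<and> (\<forall>i<length s. s ! i \<le> n ! i)"

definition factorial_partition :: "nat \<Rightarrow> nat list" where
  "factorial_partition n = rev [1..<Suc n]"

datatype trm = Var nat | C11

datatype fm =
    Le trm trm
  | Eq trm trm
  | Neg fm
  | Conj fm fm
  | Disj fm fm
  | Ex nat fm
  | All nat fm

fun tval :: "(nat \<Rightarrow> nat list) \<Rightarrow> trm \<Rightarrow> nat list" where
  "tval e (Var i) = e i"
| "tval e C11 = [1, 1]"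

fun sat :: "(nat \<Rightarrow> nat list) \<Rightarrow> fm \<Rightarrow> bool" where
  "sat e (Le s t) = young_le (tval e s) (tval e t)"
| "sat e (Eq s t) = (tval e s = tval e t)"
| "sat e (Neg \<phi>) = (\<not> sat e \<phi>)"
| "sat e (Conj \<phi> \<psi>) = (sat e \<phi> \<and> sat e \<psi>)"
| "sat e (Disj \<phi> \<psi>) = (sat e \<phi> \<or> sat e \<psi>)"
| "sat e (Ex x \<phi>) = (\<exists>p. is_partition p \<and> sat (e(x := p)) \<phi>)"
| "sat e (All x \<phi>) = (\<forall>p. is_partition p \<longrightarrow> sat (e(x := p)) \<phi>)"

fun qfree :: "fm \<Rightarrow> bool" where
  "qfree (Le _ _) = True"
| "qfree (Eq _ _) = True"
| "qfree (Neg \<phi>) = qfree \<phi>"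
| "qfree (Conj \<phi> \<psi>) = (qfree \<phi> \<and> qfree \<psi>)"
| "qfree (Disj \<phi> \<psi>) = (qfree \<phi> \<and> qfree \<psi>)"
| "qfree (Ex _ _) = False"
| "qfree (All _ _) = False"

definition Alls :: "nat list \<Rightarrow> fm \<Rightarrow> fm" where
  "Alls xs \<phi> = foldr All xs \<phi>"

definition Exs :: "nat list \<Rightarrow> fm \<Rightarrow> fm" where
  "Exs xs \<phi> = foldr Ex xs \<phi>"

definition is_Pi2 :: "fm \<Rightarrow> bool" where
  "is_Pi2 \<phi> \<longleftrightarrow> (\<exists>xs ys \<psi>. qfree \<psi> \<and> \<phi> = Alls xs (Exs ys \<psi>))"

definition Pi2_definable :: "(nat list \<Rightarrow> nat list \<Rightarrow> bool) \<Rightarrow> bool" where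
  "Pi2_definable R \<longleftrightarrow> (\<exists>\<phi>. is_Pi2 \<phi> \<and>
     (\<forall>e. (\<forall>i. is_partition (e i)) \<longrightarrow> (sat e \<phi> \<longleftrightarrow> R (e 0) (e 1))))"

end

theory Submission
  imports Defs
begin


definition pf :: "nat list \<Rightarrow> nat \<Rightarrow> nat" where
  "pf xs k = (if k < length xs then xs ! k else 0)"

lemma part_nth_pos: "is_partition s \<Longrightarrow> k < length s \<Longrightarrow> 0 < s ! k"
  by (auto simp: is_partition_def)

lemma part_anti: assumes "is_partition s" "i \<le> j" shows "pf s j \<le> pf s i"
proof (cases "i = j")
  case False
  then have "i < j" using assms(2) by simp
  then show ?thesis using assms(1) unfolding is_partition_def pf_def
    by (auto simp: sorted_wrt_iff_nth_less)
qed simp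

lemma pf_le: assumes "is_partition s" "is_partition t"
  shows "young_le s t \<longleftrightarrow> (\<forall>k. pf s k \<le> pf t k)"
proof
  assume "young_le s t" then show "\<forall>k. pf s k \<le> pf t k" by (auto simp: young_le_def pf_def)
next
  assume H: "\<forall>k. pf s k \<le> pf t k"
  have L: "length s \<le> length t"
  proof (rule ccontr)
    assume "\<not> ?thesis"
    then have "0 < pf s (length t)" using part_nth_pos[OF assms(1)] by (auto simp: pf_def)
    moreover have "pf t (length t) = 0" by (simp add: pf_def)
    ultimately show False using H by (metis not_le)
  qed
  show "young_le s t" unfolding young_le_def
  proof (intro conjI allI impI)
    fix i assume "i < length s"
    with H[rule_format, of i] L show "s ! i \<le> t ! i" by (simp add: pf_def)
  qed (rule L)
qed

lemma pf_eq: assumes "is_partition s" "is_partition t"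
  shows "s = t \<longleftrightarrow> (\<forall>k. pf s k = pf t k)"
proof
  assume H: "\<forall>k. pf s k = pf t k"
  then have "young_le s t" "young_le t s" using pf_le[OF assms] pf_le[OF assms(2,1)] by auto
  then have L: "length s = length t" and "\<forall>i<length s. s ! i = t ! i"
    by (auto simp: young_le_def intro: antisym)
  then show "s = t" by (simp add: nth_equalityI)
qed simp

lemma young_antisym: "is_partition s \<Longrightarrow> is_partition t \<Longrightarrow> young_le s t \<Longrightarrow> young_le t s \<Longrightarrow> s = t"
  by (simp add: pf_eq pf_le antisym)

lemma mk_part: assumes anti: "\<And>i j. i \<le> j \<Longrightarrow> g j \<le> g i" and N: "g N = 0"
  shows "\<exists>p. is_partition p \<and> pf p = g"
proof -
  define M where "M = (LEAST k. g k = 0)"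
  have gM: "g M = 0" using LeastI[of "\<lambda>k. g k = 0" N] N M_def by auto
  have lt: "k < M \<Longrightarrow> 0 < g k" for k using not_less_Least[of k "\<lambda>k. g k = 0"] M_def by auto
  have ge: "M \<le> k \<Longrightarrow> g k = 0" for k using anti[of M k] gM by auto
  let ?p = "map g [0..<M]"
  have "is_partition ?p" unfolding is_partition_def sorted_wrt_iff_nth_less
    by (auto intro: anti lt)
  moreover have "pf ?p = g" by (auto simp: pf_def fun_eq_iff ge)
  ultimately show ?thesis by blast
qed

lemma pf_fact: "pf (factorial_partition n) k = n - k"
  by (auto simp del: upt_Suc simp: factorial_partition_def pf_def rev_nth)

lemma part_fact: "is_partition (factorial_partition n)"
  by (auto simp del: upt_Suc simp: factorial_partition_def is_partition_def sorted_wrt_rev)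




lemma stair_cand:
  assumes "j < n"
  shows "\<exists>c. is_partition c \<and> pf c = (\<lambda>k. if k = j then n - k - 1 else n - k)"
proof (rule mk_part)
  show "(\<lambda>k. if k = j then n - k - 1 else n - k) (Suc (n + j)) = 0" by simp
next
  fix x y :: nat assume "x \<le> y"
  then show "(\<lambda>k. if k = j then n - k - 1 else n - k) y \<le> (\<lambda>k. if k = j then n - k - 1 else n - k) x"
    by auto
qed

lemma stair_A:
  assumes pa: "is_partition a" and pb: "is_partition b"
    and ab: "young_le a b" "a \<noteq> b" and bF: "young_le b (factorial_partition n)" "b \<noteq> factorial_partition n"
  shows "\<exists>c. is_partition c \<and> young_le a c \<and> a \<noteq> c \<and> young_le c (factorial_partition n)
           \<and> c \<noteq> factorial_partition n \<and> c \<noteq> b"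
proof -
  let ?F = "factorial_partition n"
  have pF: "is_partition ?F" by (rule part_fact)
  have gh: "\<forall>k. pf a k \<le> pf b k" using ab pf_le[OF pa pb] by simp
  have hF: "\<forall>k. pf b k \<le> n - k" using bF pf_le[OF pb pF] by (simp add: pf_fact)
  have "\<not> (\<forall>k. pf a k = pf b k)" using ab(2) pf_eq[OF pa pb] by simp
  then obtain k1 where k1: "pf a k1 \<noteq> pf b k1" by blast
  have "\<not> (\<forall>k. pf b k = pf ?F k)" using bF(2) pf_eq[OF pb pF] by simp
  then obtain k2 where k2: "pf b k2 \<noteq> n - k2" by (auto simp: pf_fact)
  have "pf a k1 < pf b k1" using gh k1 le_neq_implies_less by blast
  then have S1: "pf a k1 < n - k1" using hF[rule_format, of k1] by linarith
  show ?thesis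
  proof (cases "\<exists>j m. j \<noteq> m \<and> pf a j < n - j \<and> pf a m < n - m")
    case True
    then obtain j m where jm: "j \<noteq> m" "pf a j < n - j" "pf a m < n - m" by blast
    have cand: "\<exists>c. is_partition c \<and> young_le a c \<and> a \<noteq> c \<and> young_le c ?F \<and> c \<noteq> ?F
       \<and> pf c j = n - j - 1 \<and> pf c m = n - m"
      if H: "j \<noteq> m" "pf a j < n - j" "pf a m < n - m" for j m
    proof -
      obtain c where c: "is_partition c" "pf c = (\<lambda>k. if k = j then n - k - 1 else n - k)"
      proof -
        have "j < n" using H(2) by simp
        then show ?thesis using stair_cand[of j n] that by blast
      qed
      have "young_le a c" unfolding pf_le[OF pa c(1)] c(2)
      proof
        fix k show "pf a k \<le> (if k = j then n - k - 1 else n - k)"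
        proof (cases "k = j")
          case True then show ?thesis using H(2) by simp
        next
          case False then show ?thesis using gh[rule_format, of k] hF[rule_format, of k] by simp
        qed
      qed
      moreover have "a \<noteq> c"
      proof
        assume "a = c" then have "pf a m = pf c m" by simp
        then show False using c(2) H by simp
      qed
      moreover have "young_le c ?F" unfolding pf_le[OF c(1) pF] c(2) pf_fact by simp
      moreover have "c \<noteq> ?F"
      proof
        assume "c = ?F" then have "pf c j = pf ?F j" by simp
        then show False using c(2) H by (simp add: pf_fact)
      qed
      ultimately show ?thesis using c H by auto
    qed
    obtain c1 where c1: "is_partition c1" "young_le a c1" "a \<noteq> c1" "young_le c1 ?F" "c1 \<noteq> ?F"
      "pf c1 j = n - j - 1" using cand[OF jm] by blast
    obtain c2 where c2: "is_partition c2" "young_le a c2" "a \<noteq> c2" "young_le c2 ?F" "c2 \<noteq> ?F"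
      "pf c2 j = n - j" using cand[of m j] jm by blast
    have "c1 \<noteq> c2" using c1(6) c2(6) jm(2) by auto
    show ?thesis
    proof (cases "c1 = b")
      case True then show ?thesis using c2 \<open>c1 \<noteq> c2\<close> by blast
    next
      case False then show ?thesis using c1 by blast
    qed
  next
    case False
    have all: "n - k \<le> pf a k" if "k \<noteq> k1" for k
    proof (rule ccontr)
      assume "\<not> ?thesis" then have "pf a k < n - k" by simp
      then show False using False S1 that by blast
    qed
    have "pf b k2 \<le> n - k2" using hF by blast
    then have "pf b k2 < n - k2" using k2 by linarith
    moreover have "pf a k2 \<le> pf b k2" using gh by blast
    ultimately have "pf a k2 < n - k2" by linarith
    then have "k2 = k1" using all by (meson not_le)
    have "pf a k1 \<le> pf b k1" "pf b k1 \<le> n - k1" using gh hF by blast+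
    moreover have "pf b k1 \<noteq> n - k1" using k2 \<open>k2 = k1\<close> by simp
    ultimately have "pf a k1 < pf b k1" "pf b k1 < n - k1" using k1 by linarith+
    then have "pf a k1 + 2 \<le> n - k1" by linarith
    moreover have "n - Suc k1 \<le> pf a (Suc k1)" using all[of "Suc k1"] by simp
    moreover have "pf a (Suc k1) \<le> pf a k1" using part_anti[OF pa] by simp
    ultimately show ?thesis by linarith
  qed
qed




lemma pf_zero: "length s \<le> k \<Longrightarrow> pf s k = 0" by (simp add: pf_def)

lemma young_le_trans: "young_le x y \<Longrightarrow> young_le y z \<Longrightarrow> young_le x z"
  unfolding young_le_def by (meson le_trans less_le_trans)

lemma run_end:
  assumes pP: "is_partition P" and eq: "pf P i = pf P (Suc i)" and pos: "0 < pf P (Suc i)"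
  shows "\<exists>j. pf P j = pf P (Suc j) \<and> pf P (Suc (Suc j)) < pf P (Suc j)"
proof -
  define T where "T = {m. pf P m = pf P i}"
  have fin: "finite T"
  proof (rule finite_subset)
    show "T \<subseteq> {..<length P}"
    proof
      fix m assume "m \<in> T"
      then have "pf P m > 0" using eq pos by (simp add: T_def)
      then show "m \<in> {..<length P}" by (metis lessThan_iff not_less pf_zero less_irrefl)
    qed
  qed simp
  have SiT: "Suc i \<in> T" using eq by (simp add: T_def)
  define M where "M = Max T"
  have MT: "M \<in> T" using fin SiT M_def by (metis Max_in empty_iff)
  have geM: "Suc i \<le> M" using fin SiT M_def by simp
  have "Suc M \<notin> T" using fin M_def by (metis Max_ge Suc_n_not_le_n)
  then have "pf P (Suc M) \<noteq> pf P i" by (simp add: T_def)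
  moreover have "pf P (Suc M) \<le> pf P M" using part_anti[OF pP] by simp
  ultimately have A: "pf P (Suc M) < pf P M" using MT by (simp add: T_def)
  have "pf P M \<le> pf P (M - 1)" using part_anti[OF pP] by simp
  moreover have "pf P (M - 1) \<le> pf P i" using part_anti[OF pP] geM by simp
  ultimately have B: "pf P (M - 1) = pf P M" using MT by (simp add: T_def)
  have "Suc (M - 1) = M" using geM by simp
  then show ?thesis using A B by (metis)
qed

lemma dom_exists:
  assumes pP: "is_partition P" and P0: "pf P 0 = n" and ne: "pf P k \<noteq> n - k"
  shows "(\<exists>i. pf P (Suc i) + 2 \<le> pf P i) \<or> (\<exists>j. pf P j = pf P (Suc j) \<and> pf P (Suc (Suc j)) < pf P (Suc j))"
proof -
  define k0 where "k0 = (LEAST k. pf P k \<noteq> n - k)"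
  have k0: "pf P k0 \<noteq> n - k0" using LeastI[of "\<lambda>k. pf P k \<noteq> n - k" k] ne k0_def by blast
  have lessk0: "m < k0 \<Longrightarrow> pf P m = n - m" for m using not_less_Least[of m "\<lambda>k. pf P k \<noteq> n - k"] k0_def by blast
  have "k0 \<noteq> 0" using k0 P0 by (metis diff_zero)
  then obtain q where q: "k0 = Suc q" by (metis not0_implies_Suc)
  have pq: "pf P q = n - q" using lessk0 q by simp
  have le: "pf P (Suc q) \<le> pf P q" using part_anti[OF pP] by simp
  show ?thesis
  proof (cases "pf P (Suc q) + 2 \<le> pf P q")
    case True then show ?thesis by blast
  next
    case False
    show ?thesis
    proof (cases "pf P (Suc q) = pf P q")
      case True
      have "0 < pf P (Suc q)"
      proof (rule ccontr)
        assume "\<not> ?thesis"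
        then have "pf P (Suc q) = 0" by simp
        then have "n - q = 0" using True pq by simp
        then show False using k0 q \<open>pf P (Suc q) = 0\<close> by simp
      qed
      then show ?thesis using run_end[OF pP True[symmetric]] by blast
    next
      case F2: False
      then have "pf P (Suc q) + 1 = pf P q" using False le by linarith
      then have "pf P (Suc q) = n - Suc q" using pq by linarith
      then show ?thesis using k0 q by simp
    qed
  qed
qed

lemma no_c:
  assumes pa: "is_partition a" and pb: "is_partition b" and pP: "is_partition P" and pc: "is_partition c"
    and ab: "young_le a b" "a \<noteq> b" and bP: "young_le b P" "b \<noteq> P"
    and cases: "pf c = pf a \<or> pf c = pf b \<or> pf c = pf P"
  shows "\<not> ((young_le a c \<and> a \<noteq> c \<and> young_le c b \<and> c \<noteq> b) \<or>
             (young_le b c \<and> b \<noteq> c \<and> young_le c P \<and> c \<noteq> P) \<or>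
             (young_le a c \<and> a \<noteq> c \<and> young_le c P \<and> c \<noteq> P \<and> c \<noteq> b))"
proof -
  have "c = a \<or> c = b \<or> c = P" using cases pf_eq[OF pc pa] pf_eq[OF pc pb] pf_eq[OF pc pP] by metis
  then show ?thesis using young_antisym[OF pa pb] young_antisym[OF pb pP] ab bP by blast
qed



lemma horiz:
  assumes pP: "is_partition P" and h: "pf P (Suc i) + 2 \<le> pf P i"
  shows "\<exists>a b. is_partition a \<and> is_partition b \<and> young_le a b \<and> a \<noteq> b \<and> young_le b P \<and> b \<noteq> P \<and>
     (\<forall>c. is_partition c \<longrightarrow> \<not> ((young_le a c \<and> a \<noteq> c \<and> young_le c b \<and> c \<noteq> b) \<or>
             (young_le b c \<and> b \<noteq> c \<and> young_le c P \<and> c \<noteq> P) \<or>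
             (young_le a c \<and> a \<noteq> c \<and> young_le c P \<and> c \<noteq> P \<and> c \<noteq> b)))"
proof -
  let ?p = "pf P"
  define ga where "ga = (\<lambda>k. if k = i then ?p k - 2 else ?p k)"
  define gb where "gb = (\<lambda>k. if k = i then ?p k - 1 else ?p k)"
  have N: "?p (Suc (Suc (length P + i))) = 0" by (simp add: pf_def)
  have anti: "\<And>x y. x \<le> y \<Longrightarrow> ?p y \<le> ?p x" using part_anti[OF pP] by blast
  have ai: "\<And>y. i < y \<Longrightarrow> ?p y \<le> ?p (Suc i)" using anti by (simp add: Suc_le_eq)
  have "\<exists>a. is_partition a \<and> pf a = ga"
  proof (rule mk_part)
    show "ga (Suc (Suc (length P + i))) = 0" using N by (simp add: ga_def)
    fix x y :: nat assume xy: "x \<le> y"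
    show "ga y \<le> ga x"
    proof (cases "x = i")
      case True then show ?thesis using xy ai[of y] h by (auto simp: ga_def)
    next
      case False then show ?thesis using xy anti[of x y] anti[of x i] by (auto simp: ga_def)
    qed
  qed
  then obtain a where a: "is_partition a" "pf a = ga" by blast
  have "\<exists>b. is_partition b \<and> pf b = gb"
  proof (rule mk_part)
    show "gb (Suc (Suc (length P + i))) = 0" using N by (simp add: gb_def)
    fix x y :: nat assume xy: "x \<le> y"
    show "gb y \<le> gb x"
    proof (cases "x = i")
      case True then show ?thesis using xy ai[of y] h by (auto simp: gb_def)
    next
      case False then show ?thesis using xy anti[of x y] anti[of x i] by (auto simp: gb_def)
    qed
  qed
  then obtain b where b: "is_partition b" "pf b = gb" by blast
  have ab: "young_le a b" using pf_le[OF a(1) b(1)] a(2) b(2) by (simp add: ga_def gb_def)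
  have bP: "young_le b P" using pf_le[OF b(1) pP] b(2) by (simp add: gb_def)
  have anb: "a \<noteq> b"
  proof
    assume "a = b" then have "ga i = gb i" using a(2) b(2) by simp
    then show False using h by (simp add: ga_def gb_def)
  qed
  have bnP: "b \<noteq> P"
  proof
    assume "b = P" then have "gb i = ?p i" using b(2) by simp
    then show False using h by (simp add: gb_def)
  qed
  have "\<forall>c. is_partition c \<longrightarrow> \<not> ((young_le a c \<and> a \<noteq> c \<and> young_le c b \<and> c \<noteq> b) \<or>
             (young_le b c \<and> b \<noteq> c \<and> young_le c P \<and> c \<noteq> P) \<or>
             (young_le a c \<and> a \<noteq> c \<and> young_le c P \<and> c \<noteq> P \<and> c \<noteq> b))"
  proof (intro allI impI)
    fix c assume pc: "is_partition c"
    show "\<not> ((young_le a c \<and> a \<noteq> c \<and> young_le c b \<and> c \<noteq> b) \<or>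
             (young_le b c \<and> b \<noteq> c \<and> young_le c P \<and> c \<noteq> P) \<or>
             (young_le a c \<and> a \<noteq> c \<and> young_le c P \<and> c \<noteq> P \<and> c \<noteq> b))"
    proof (cases "young_le a c \<and> young_le c P")
      case False then show ?thesis using young_le_trans[of c b P] young_le_trans[of a b c] ab bP by blast
    next
      case True
      then have lo: "\<And>k. ga k \<le> pf c k" and hi: "\<And>k. pf c k \<le> ?p k"
        using pf_le[OF a(1) pc] pf_le[OF pc pP] a(2) by auto
      have ck: "k \<noteq> i \<Longrightarrow> pf c k = ?p k" for k using lo[of k] hi[of k] by (simp add: ga_def)
      have "pf c i = ?p i - 2 \<or> pf c i = ?p i - 1 \<or> pf c i = ?p i"
        using lo[of i] hi[of i] h by (simp add: ga_def) linarith
      moreover have form: "\<And>k. pf c k = (if k = i then pf c i else ?p k)"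
        using ck by auto
      ultimately have "pf c = pf a \<or> pf c = pf b \<or> pf c = pf P"
      proof (elim disjE)
        assume c1: "pf c i = ?p i - 2"
        have "pf c k = pf a k" for k unfolding a(2) ga_def using form[of k] c1 by simp
        then show ?thesis by blast
      next
        assume c1: "pf c i = ?p i - 1"
        have "pf c k = pf b k" for k unfolding b(2) gb_def using form[of k] c1 by simp
        then show ?thesis by blast
      next
        assume c1: "pf c i = ?p i"
        have "pf c k = pf P k" for k using form[of k] c1 by simp
        then show ?thesis by blast
      qed
      then show ?thesis using no_c[OF a(1) b(1) pP pc ab anb bP bnP] by blast
    qed
  qed
  then show ?thesis using a(1) b(1) ab anb bP bnP by blast
qed




lemma vert:
  assumes pP: "is_partition P" and h: "pf P i = pf P (Suc i)" and h2: "pf P (Suc (Suc i)) < pf P (Suc i)"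
  shows "\<exists>a b. is_partition a \<and> is_partition b \<and> young_le a b \<and> a \<noteq> b \<and> young_le b P \<and> b \<noteq> P \<and>
     (\<forall>c. is_partition c \<longrightarrow> \<not> ((young_le a c \<and> a \<noteq> c \<and> young_le c b \<and> c \<noteq> b) \<or>
             (young_le b c \<and> b \<noteq> c \<and> young_le c P \<and> c \<noteq> P) \<or>
             (young_le a c \<and> a \<noteq> c \<and> young_le c P \<and> c \<noteq> P \<and> c \<noteq> b)))"
proof -
  let ?p = "pf P"
  define ga where "ga = (\<lambda>k. if k = i \<or> k = Suc i then ?p k - 1 else ?p k)"
  define gb where "gb = (\<lambda>k. if k = Suc i then ?p k - 1 else ?p k)"
  have N: "?p (Suc (Suc (length P + i))) = 0" by (simp add: pf_def)
  have anti: "\<And>x y. x \<le> y \<Longrightarrow> ?p y \<le> ?p x" using part_anti[OF pP] by blast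
  have ai: "\<And>y. Suc i < y \<Longrightarrow> ?p y \<le> ?p (Suc (Suc i))" using anti by (simp add: Suc_le_eq)
  have "\<exists>a. is_partition a \<and> pf a = ga"
  proof (rule mk_part)
    show "ga (Suc (Suc (length P + i))) = 0" using N by (simp add: ga_def)
    fix x y :: nat assume xy: "x \<le> y"
    show "ga y \<le> ga x"
    proof (cases "x = i \<or> x = Suc i")
      case True
      then show ?thesis
      proof
        assume "x = i" then show ?thesis using xy ai[of y] h h2 anti[of x y] by (cases "y = i \<or> y = Suc i") (auto simp: ga_def)
      next
        assume "x = Suc i" then show ?thesis using xy ai[of y] h h2 anti[of x y] by (cases "y = Suc i") (auto simp: ga_def)
      qed
    next
      case False then show ?thesis using xy anti[of x y] by (auto simp: ga_def)
    qed
  qed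
  then obtain a where a: "is_partition a" "pf a = ga" by blast
  have "\<exists>b. is_partition b \<and> pf b = gb"
  proof (rule mk_part)
    show "gb (Suc (Suc (length P + i))) = 0" using N by (simp add: gb_def)
    fix x y :: nat assume xy: "x \<le> y"
    show "gb y \<le> gb x"
    proof (cases "x = i \<or> x = Suc i")
      case True
      then show ?thesis
      proof
        assume "x = i" then show ?thesis using xy ai[of y] h h2 anti[of x y] by (cases "y = i \<or> y = Suc i") (auto simp: gb_def)
      next
        assume "x = Suc i" then show ?thesis using xy ai[of y] h h2 anti[of x y] by (cases "y = Suc i") (auto simp: gb_def)
      qed
    next
      case False then show ?thesis using xy anti[of x y] by (auto simp: gb_def)
    qed
  qed
  then obtain b where b: "is_partition b" "pf b = gb" by blast
  have ab: "young_le a b" using pf_le[OF a(1) b(1)] a(2) b(2) by (simp add: ga_def gb_def)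
  have bP: "young_le b P" using pf_le[OF b(1) pP] b(2) by (simp add: gb_def)
  have anb: "a \<noteq> b"
  proof
    assume "a = b" then have "ga i = gb i" using a(2) b(2) by simp
    then have "?p i - 1 = ?p i" by (simp add: ga_def gb_def)
    then show False using h h2 by linarith
  qed
  have bnP: "b \<noteq> P"
  proof
    assume "b = P" then have "gb (Suc i) = ?p (Suc i)" using b(2) by simp
    then have "?p (Suc i) - 1 = ?p (Suc i)" by (simp add: gb_def)
    then show False using h h2 by linarith
  qed
  have "\<forall>c. is_partition c \<longrightarrow> \<not> ((young_le a c \<and> a \<noteq> c \<and> young_le c b \<and> c \<noteq> b) \<or>
             (young_le b c \<and> b \<noteq> c \<and> young_le c P \<and> c \<noteq> P) \<or>
             (young_le a c \<and> a \<noteq> c \<and> young_le c P \<and> c \<noteq> P \<and> c \<noteq> b))"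
  proof (intro allI impI)
    fix c assume pc: "is_partition c"
    show "\<not> ((young_le a c \<and> a \<noteq> c \<and> young_le c b \<and> c \<noteq> b) \<or>
             (young_le b c \<and> b \<noteq> c \<and> young_le c P \<and> c \<noteq> P) \<or>
             (young_le a c \<and> a \<noteq> c \<and> young_le c P \<and> c \<noteq> P \<and> c \<noteq> b))"
    proof (cases "young_le a c \<and> young_le c P")
      case False then show ?thesis using young_le_trans[of c b P] young_le_trans[of a b c] ab bP by blast
    next
      case True
      then have lo: "\<And>k. ga k \<le> pf c k" and hi: "\<And>k. pf c k \<le> ?p k"
        using pf_le[OF a(1) pc] pf_le[OF pc pP] a(2) by auto
      have ck: "k \<noteq> i \<Longrightarrow> k \<noteq> Suc i \<Longrightarrow> pf c k = ?p k" for k using lo[of k] hi[of k] by (simp add: ga_def)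
      have "pf c (Suc i) \<le> pf c i" using part_anti[OF pc] by simp
      then have "(pf c i = ?p i - 1 \<and> pf c (Suc i) = ?p i - 1) \<or> (pf c i = ?p i \<and> pf c (Suc i) = ?p i - 1) \<or> (pf c i = ?p i \<and> pf c (Suc i) = ?p i)"
        using lo[of i] hi[of i] lo[of "Suc i"] hi[of "Suc i"] h h2 by (simp add: ga_def) linarith
      moreover have form: "\<And>k. pf c k = (if k = i then pf c i else if k = Suc i then pf c (Suc i) else ?p k)"
        using ck by auto
      ultimately have "pf c = pf a \<or> pf c = pf b \<or> pf c = pf P"
      proof (elim disjE conjE)
        assume c1: "pf c i = ?p i - 1" "pf c (Suc i) = ?p i - 1"
        have "pf c k = pf a k" for k unfolding a(2) ga_def using form[of k] c1 h by simp
        then show ?thesis by blast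
      next
        assume c1: "pf c i = ?p i" "pf c (Suc i) = ?p i - 1"
        have "pf c k = pf b k" for k unfolding b(2) gb_def using form[of k] c1 h by simp
        then show ?thesis by blast
      next
        assume c1: "pf c i = ?p i" "pf c (Suc i) = ?p i"
        have "pf c k = pf P k" for k using form[of k] c1 h by simp
        then show ?thesis by blast
      qed
      then show ?thesis using no_c[OF a(1) b(1) pP pc ab anb bP bnP] by blast
    qed
  qed
  then show ?thesis using a(1) b(1) ab anb bP bnP by blast
qed




definition lt' :: "nat \<Rightarrow> nat \<Rightarrow> fm" where
  "lt' x y = Conj (Le (Var x) (Var y)) (Neg (Eq (Var x) (Var y)))"

definition psi :: fm where
"psi = Conj (Neg (Le C11 (Var 0)))
 (Conj (Neg (Le (Var 0) (Var 5)))
 (Conj (Le (Var 0) (Var 1))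
 (Conj (Disj (Le C11 (Var 2)) (Disj (Neg (Le (Var 2) (Var 1))) (Le (Var 2) (Var 0))))
  (Disj (Neg (Conj (lt' 3 4) (lt' 4 1)))
   (Disj (Conj (lt' 3 6) (lt' 6 4))
    (Disj (Conj (lt' 4 6) (lt' 6 1))
     (Conj (lt' 3 6) (Conj (lt' 6 1) (Neg (Eq (Var 6) (Var 4)))))))))))"

definition phi :: fm where "phi = Alls [2,3,4] (Exs [5,6] psi)"

definition Q :: "nat list \<Rightarrow> nat list \<Rightarrow> nat list \<Rightarrow> nat list \<Rightarrow> nat list \<Rightarrow> nat list \<Rightarrow> nat list \<Rightarrow> bool" where
"Q r p y a b z c = (\<not> young_le [1,1] r \<and> \<not> young_le r z \<and> young_le r p \<and>
   (young_le [1,1] y \<or> \<not> young_le y p \<or> young_le y r) \<and>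
   (\<not>((young_le a b \<and> a \<noteq> b) \<and> (young_le b p \<and> b \<noteq> p)) \<or>
    ((young_le a c \<and> a \<noteq> c) \<and> (young_le c b \<and> c \<noteq> b)) \<or>
    ((young_le b c \<and> b \<noteq> c) \<and> (young_le c p \<and> c \<noteq> p)) \<or>
    ((young_le a c \<and> a \<noteq> c) \<and> (young_le c p \<and> c \<noteq> p) \<and> c \<noteq> b)))"

lemma is_Pi2_phi: "is_Pi2 phi"
  unfolding is_Pi2_def phi_def by (rule exI[of _ "[2,3,4]"], rule exI[of _ "[5,6]"], rule exI[of _ psi])
    (simp add: psi_def lt'_def)

lemma sat_phi: "sat e phi \<longleftrightarrow> (\<forall>y. is_partition y \<longrightarrow> (\<forall>a. is_partition a \<longrightarrow> (\<forall>b. is_partition b \<longrightarrow>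
    (\<exists>z. is_partition z \<and> (\<exists>c. is_partition c \<and> Q (e 0) (e 1) y a b z c)))))"
  by (simp add: phi_def Alls_def Exs_def psi_def lt'_def Q_def)




lemma not11: "is_partition r \<Longrightarrow> \<not> young_le [1,1] r \<longleftrightarrow> length r \<le> 1"
proof
  assume pr: "is_partition r" and H: "\<not> young_le [1,1] r"
  show "length r \<le> 1"
  proof (rule ccontr)
    assume "\<not> ?thesis"
    then have "0 < length r" "1 < length r" by auto
    then have "0 < r ! 0" "0 < r ! 1" using part_nth_pos[OF pr, of 0] part_nth_pos[OF pr, of 1] by auto
    then have "young_le [1,1] r" using \<open>\<not> length r \<le> 1\<close> unfolding young_le_def
      by (auto simp: less_Suc_eq)
    then show False using H by simp
  qed
next
  assume "length r \<le> 1" then show "\<not> young_le [1,1] r" by (simp add: young_le_def)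
qed

lemma part_single: "0 < n \<Longrightarrow> is_partition [n]" by (simp add: is_partition_def)

lemma fact0: "1 \<le> n \<Longrightarrow> factorial_partition n ! 0 = n \<and> factorial_partition n \<noteq> []"
proof -
  assume n: "1 \<le> n"
  have "pf (factorial_partition n) 0 = n" by (simp add: pf_fact)
  moreover have "length (factorial_partition n) = n" by (simp add: factorial_partition_def)
  ultimately show ?thesis using n by (auto simp: pf_def)
qed

lemma fact_len: "length (factorial_partition n) = n" by (simp add: factorial_partition_def)

lemma charR:
  assumes n: "1 \<le> n" and pa: "is_partition a" and pb: "is_partition b" and py: "is_partition y"
  shows "\<exists>z. is_partition z \<and> (\<exists>c. is_partition c \<and> Q [n] (factorial_partition n) y a b z c)"
proof -
  let ?F = "factorial_partition n"
  have c1: "\<not> young_le [1,1] [n]" by (simp add: young_le_def)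
  have c2: "\<not> young_le [n] []" by (simp add: young_le_def)
  have c3: "young_le [n] ?F" using fact0[OF n] n by (simp add: young_le_def fact_len)
  have c4: "young_le [1,1] y \<or> \<not> young_le y ?F \<or> young_le y [n]"
  proof (cases "young_le [1,1] y \<or> \<not> young_le y ?F")
    case False
    then have "length y \<le> 1" "young_le y ?F" using not11[OF py] by auto
    have "young_le y [n]" unfolding young_le_def
    proof (intro conjI allI impI)
      show "length y \<le> length [n]" using \<open>length y \<le> 1\<close> by simp
      fix i assume "i < length y"
      then have "i = 0" using \<open>length y \<le> 1\<close> by simp
      then show "y ! i \<le> [n] ! i" using \<open>young_le y ?F\<close> fact0[OF n] \<open>i < length y\<close>
        unfolding young_le_def by auto
    qed
    then show ?thesis by blast
  qed blast
  obtain c where c: "is_partition c \<and> (\<not>((young_le a b \<and> a \<noteq> b) \<and> (young_le b ?F \<and> b \<noteq> ?F)) \<or>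
    ((young_le a c \<and> a \<noteq> c) \<and> (young_le c b \<and> c \<noteq> b)) \<or>
    ((young_le b c \<and> b \<noteq> c) \<and> (young_le c ?F \<and> c \<noteq> ?F)) \<or>
    ((young_le a c \<and> a \<noteq> c) \<and> (young_le c ?F \<and> c \<noteq> ?F) \<and> c \<noteq> b))"
  proof (cases "(young_le a b \<and> a \<noteq> b) \<and> (young_le b ?F \<and> b \<noteq> ?F)")
    case True
    then obtain c where "is_partition c \<and> young_le a c \<and> a \<noteq> c \<and> young_le c ?F
           \<and> c \<noteq> ?F \<and> c \<noteq> b" using stair_A[OF pa pb] by blast
    then show ?thesis using that by blast
  next
    case False
    have "is_partition []" by (simp add: is_partition_def)
    then show ?thesis using that False by blast
  qed
  have "is_partition []" by (simp add: is_partition_def)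
  then show ?thesis using c c1 c2 c3 c4 unfolding Q_def by blast
qed




lemma charL:
  assumes pr: "is_partition r" and pp: "is_partition p"
    and H: "\<forall>y. is_partition y \<longrightarrow> (\<forall>a. is_partition a \<longrightarrow> (\<forall>b. is_partition b \<longrightarrow>
    (\<exists>z. is_partition z \<and> (\<exists>c. is_partition c \<and> Q r p y a b z c))))"
  shows "\<exists>n\<ge>1. r = [n] \<and> p = factorial_partition n"
proof -
  have pe: "is_partition []" by (simp add: is_partition_def)
  obtain z c where zc: "Q r p [] [] [] z c" using H pe by blast
  then have "\<not> young_le [1,1] r" "\<not> young_le r z" "young_le r p" unfolding Q_def by auto
  then have "length r \<le> 1" "r \<noteq> []" using not11[OF pr] by (auto simp: young_le_def)
  then obtain n where rn: "r = [n]" by (cases r) auto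
  have n: "1 \<le> n" using part_nth_pos[OF pr, of 0] rn by simp
  have "young_le [n] p" using \<open>young_le r p\<close> rn by simp
  then have p0: "p \<noteq> []" "n \<le> p ! 0" by (auto simp: young_le_def)
  have py: "is_partition [p ! 0]" using p0 n by (simp add: is_partition_def)
  obtain z' c' where "Q r p [p ! 0] [] [] z' c'" using H pe py by blast
  moreover have "\<not> young_le [1,1] [p ! 0]" by (simp add: young_le_def)
  moreover have "young_le [p ! 0] p" using p0 by (simp add: young_le_def Suc_le_eq)
  ultimately have "young_le [p ! 0] [n]" unfolding Q_def rn by auto
  then have "p ! 0 \<le> n" by (simp add: young_le_def)
  then have P0: "pf p 0 = n" using p0 by (simp add: pf_def)
  have "p = factorial_partition n"
  proof (rule ccontr)
    assume ne: "p \<noteq> factorial_partition n"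
    then have "\<not> (\<forall>k. pf p k = pf (factorial_partition n) k)" using pf_eq[OF pp part_fact] by simp
    then obtain k where "pf p k \<noteq> n - k" by (auto simp: pf_fact)
    then have D: "(\<exists>i. pf p (Suc i) + 2 \<le> pf p i) \<or> (\<exists>j. pf p j = pf p (Suc j) \<and> pf p (Suc (Suc j)) < pf p (Suc j))"
      using dom_exists[OF pp P0] by blast
    have "\<exists>a b. is_partition a \<and> is_partition b \<and> young_le a b \<and> a \<noteq> b \<and> young_le b p \<and> b \<noteq> p \<and>
     (\<forall>c. is_partition c \<longrightarrow> \<not> ((young_le a c \<and> a \<noteq> c \<and> young_le c b \<and> c \<noteq> b) \<or>
             (young_le b c \<and> b \<noteq> c \<and> young_le c p \<and> c \<noteq> p) \<or>
             (young_le a c \<and> a \<noteq> c \<and> young_le c p \<and> c \<noteq> p \<and> c \<noteq> b)))"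
      using D horiz[OF pp] vert[OF pp] by blast
    then obtain a b where ab: "is_partition a" "is_partition b" "young_le a b" "a \<noteq> b" "young_le b p" "b \<noteq> p"
      and noc: "\<forall>c. is_partition c \<longrightarrow> \<not> ((young_le a c \<and> a \<noteq> c \<and> young_le c b \<and> c \<noteq> b) \<or>
             (young_le b c \<and> b \<noteq> c \<and> young_le c p \<and> c \<noteq> p) \<or>
             (young_le a c \<and> a \<noteq> c \<and> young_le c p \<and> c \<noteq> p \<and> c \<noteq> b))" by blast
    obtain z c where "is_partition c" "Q r p [] a b z c" using H pe ab(1,2) by blast
    then show False using noc ab unfolding Q_def by blast
  qed
  then show ?thesis using rn n by blast
qed

theorem proposition3p8:
  shows "Pi2_definable (\<lambda>\<rho> \<pi>. \<exists>n\<ge>1. \<rho> = [n] \<and> \<pi> = factorial_partition n)"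
  unfolding Pi2_definable_def
proof (intro exI conjI allI impI)
  show "is_Pi2 phi" by (rule is_Pi2_phi)
  fix e :: "nat \<Rightarrow> nat list" assume pe: "\<forall>i. is_partition (e i)"
  show "sat e phi \<longleftrightarrow> (\<exists>n\<ge>1. e 0 = [n] \<and> e 1 = factorial_partition n)"
  proof
    assume "sat e phi"
    then show "\<exists>n\<ge>1. e 0 = [n] \<and> e 1 = factorial_partition n"
      using charL[of "e 0" "e 1"] pe sat_phi by blast
  next
    assume "\<exists>n\<ge>1. e 0 = [n] \<and> e 1 = factorial_partition n"
    then obtain n where n: "1 \<le> n" "e 0 = [n]" "e 1 = factorial_partition n" by blast
    show "sat e phi" unfolding sat_phi using charR[OF n(1)] n(2,3) by simp
  qed
qed


end
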